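(* Let $C$ and $D$ be $R$-linear codes of length $n$, let $\eta$ be a bi-composition of $n$, and let $r,s$ be the compositions of $n$ given by \[ r_i=\sum_{\beta\in R}\eta_{\omega_i\beta},\qquad s_i=\sum_{\alpha\in R}\eta_{\alpha\omega_i}. \] Let $B^{C',D}_{r,s,\eta}$ be the number of pairs $(u,v)\in C'\times D$ with $\mathrm{comp}(u)=r$, $\mathrm{comp}(v)=s$ and $\eta(u,v)=\eta$. Then \[ \sum_{\sigma\in S_n}B^{C^\sigma,D}_{r,s,\eta}=A_r^C\,A_s^D\,\prod_{i=0}^{|R|-1}r_i!\;\prod_{i=0}^{|R|-1}\frac{s_i!}{\prod_{j=0}^{|R|-1}\eta_{\omega_j\omega_i}!}. \]
   Context: $R$ denotes $\mathbb F_q$ or $\mathbb Z_k$ ($k\ge 2$), with elements in a fixed order $0=\omega_0,\dots,\omega_{|R|-1}$. An $R$-linear code of length $n$ is an $\mathbb F_q$-subspace of $\mathbb F_q^n$, respectively an additive subgroup of $\mathbb Z_k^n$. For $u\in R^n$, $\mathrm{comp}(u)=(s_0(u),\dots,s_{|R|-1}(u))$, where $s_i(u)$ is the number of coordinates equal to $\omega_i$. $A_s^C=\#\{u\in C:\mathrm{comp}(u)=s\}$. For $u,v\in R^n$, $\eta(u,v)$ is the vector with components $\eta_{\alpha\beta}(u,v)=\#\{i:(u_i,v_i)=(\alpha,\beta)\}$ for $(\alpha,\beta)\in R^2$. A bi-composition of $n$ is a family of non-negative integers $\eta_{\alpha\beta}$, $(\alpha,\beta)\in R^2$, summing to $n$.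 For $\sigma\in S_n$, $u^\sigma=(u_{\sigma(1)},\dots,u_{\sigma(n)})$ and $C^\sigma=\{u^\sigma:u\in C\}$. *)

theory Defs
  imports "HOL-Combinatorics.Permutations" Complex_Main
begin

text \<open>The alphabet R is a finite commutative ring type which is either a field
 (F_q) or the ring Z_k, k = CARD('a) >= 2 (a finite ring generated additively by 1).
 Vectors of length n are lists of length n; coordinates are indexed 0..n-1.\<close>

definition is_field_or_Zk :: "'a::{finite,comm_ring_1} itself \<Rightarrow> bool" where
  "is_field_or_Zk _ \<longleftrightarrow>
     ((0::'a) \<noteq> 1 \<and> (\<forall>x::'a. x \<noteq> 0 \<longrightarrow> (\<exists>y. x * y = 1)))
   \<or> (card (UNIV::'a set) \<ge> 2 \<and> (\<forall>x::'a. \<exists>m::nat. x = of_nat m))"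

text \<open>R-linear code of length n: an R-submodule of R^n (for a field: a subspace;
 for Z_k: an additive subgroup, which is automatically closed under scalars).\<close>
definition R_linear_code :: "nat \<Rightarrow> 'a::{finite,comm_ring_1} list set \<Rightarrow> bool" where
  "R_linear_code n C \<longleftrightarrow>
     (\<forall>u\<in>C. length u = n) \<and> replicate n 0 \<in> C \<and>
     (\<forall>u\<in>C. \<forall>v\<in>C. map2 (+) u v \<in> C) \<and>
     (\<forall>a. \<forall>u\<in>C. map ((*) a) u \<in> C)"

definition comp :: "'a list \<Rightarrow> 'a \<Rightarrow> nat" where
  "comp u a = card {i. i < length u \<and> u ! i = a}"

definition A_num :: "'a list set \<Rightarrow> ('a \<Rightarrow> nat) \<Rightarrow> nat" where
  "A_num C s = card {u \<in> C. comp u = s}"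

definition eta :: "'a list \<Rightarrow> 'a list \<Rightarrow> 'a \<times> 'a \<Rightarrow> nat" where
  "eta u v = (\<lambda>(a, b). card {i. i < length u \<and> u ! i = a \<and> v ! i = b})"

definition bicomposition :: "nat \<Rightarrow> ('a::finite \<times> 'a \<Rightarrow> nat) \<Rightarrow> bool" where
  "bicomposition n e \<longleftrightarrow> (\<Sum>p\<in>UNIV. e p) = n"

definition perm_vec :: "(nat \<Rightarrow> nat) \<Rightarrow> 'a list \<Rightarrow> 'a list" where
  "perm_vec \<sigma> u = map (\<lambda>i. u ! \<sigma> i) [0..<length u]"

definition perm_code :: "(nat \<Rightarrow> nat) \<Rightarrow> 'a list set \<Rightarrow> 'a list set" where
  "perm_code \<sigma> C = perm_vec \<sigma> ` C"

definition B_num :: "'a list set \<Rightarrow> 'a list set \<Rightarrow> ('a \<Rightarrow> nat) \<Rightarrow> ('a \<Rightarrow> nat)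
     \<Rightarrow> ('a \<times> 'a \<Rightarrow> nat) \<Rightarrow> nat" where
  "B_num C D r s e = card {(u, v). u \<in> C \<and> v \<in> D \<and> comp u = r \<and> comp v = s \<and> eta u v = e}"

end

theory Submission
  imports Defs
begin

lemma prod_fact_dec:
  fixes f :: "'b::finite \<Rightarrow> nat"
  assumes "f a0 \<ge> 1"
  shows "(\<Prod>a\<in>UNIV. fact (f a) :: real) = real (f a0) * (\<Prod>a\<in>UNIV. fact ((f(a0 := f a0 - 1)) a))"
proof -
  have "(\<Prod>a\<in>UNIV. fact (f a) :: real) = fact (f a0) * (\<Prod>a\<in>UNIV-{a0}. fact (f a))"
    by (rule prod.remove) auto
  also have "fact (f a0) = (real (f a0) * fact (f a0 - 1) :: real)"
    using assms by (simp add: fact_reduce)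
  also have "(\<Prod>a\<in>UNIV-{a0}. fact (f a) :: real) = (\<Prod>a\<in>UNIV-{a0}. fact ((f(a0 := f a0 - 1)) a))"
    by (rule prod.cong) auto
  also have "(\<Prod>a\<in>UNIV. fact ((f(a0 := f a0 - 1)) a) :: real)
     = fact (f a0 - 1) * (\<Prod>a\<in>UNIV-{a0}. fact ((f(a0 := f a0 - 1)) a))"
    by (subst prod.remove[of _ a0]) auto
  ultimately show ?thesis by simp
qed

definition Gf :: "('a::finite \<times> 'a \<Rightarrow> nat) \<Rightarrow> real" where
  "Gf e = (\<Prod>a\<in>UNIV. fact (\<Sum>b\<in>UNIV. e (a, b))) * (\<Prod>b\<in>UNIV. fact (\<Sum>a\<in>UNIV. e (a, b)))
           / (\<Prod>p\<in>UNIV. fact (e p))"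

lemma Gf_alt: "Gf e = (\<Prod>a\<in>UNIV. fact (\<Sum>b\<in>UNIV. e (a, b))) *
   (\<Prod>b\<in>UNIV. fact (\<Sum>a\<in>UNIV. e (a, b)) / (\<Prod>a\<in>UNIV. fact (e (a, b))))"
proof -
  have "(\<Prod>p\<in>UNIV. fact (e p) :: real) = (\<Prod>b\<in>UNIV. \<Prod>a\<in>UNIV. fact (e (a, b)))"
    by (subst prod.swap) (simp add: prod.cartesian_product' flip: UNIV_Times_UNIV)
  then show ?thesis unfolding Gf_def by (simp add: prod_dividef)
qed

lemma sum_dec:
  fixes f :: "'b::finite \<Rightarrow> nat"
  assumes "f a0 \<ge> 1"
  shows "(\<Sum>a\<in>UNIV. (f(a0 := f a0 - 1)) a) = (\<Sum>a\<in>UNIV. f a) - 1"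
proof -
  have "(\<Sum>a\<in>UNIV. f a) = f a0 + (\<Sum>a\<in>UNIV-{a0}. f a)"
    by (rule sum.remove) auto
  moreover have "(\<Sum>a\<in>UNIV. (f(a0 := f a0 - 1)) a) = (f a0 - 1) + (\<Sum>a\<in>UNIV-{a0}. f a)"
    by (subst sum.remove[of _ a0]) (auto intro!: sum.cong)
  ultimately show ?thesis using assms by simp
qed

lemma Gf_step:
  fixes e :: "'a::finite \<times> 'a \<Rightarrow> nat"
  assumes "e (a0, b0) \<ge> 1"
  shows "Gf e * real (e (a0, b0)) = Gf (e((a0, b0) := e (a0, b0) - 1))
          * real (\<Sum>b\<in>UNIV. e (a0, b)) * real (\<Sum>a\<in>UNIV. e (a, b0))"
proof -
  let ?e' = "e((a0, b0) := e (a0, b0) - 1)"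
  define R where "R = (\<lambda>a. \<Sum>b\<in>UNIV. e (a, b))"
  define S where "S = (\<lambda>b. \<Sum>a\<in>UNIV. e (a, b))"
  have R1: "R a0 \<ge> 1" unfolding R_def using assms
    by (metis UNIV_I finite_class.finite_UNIV le_trans member_le_sum zero_le)
  have S1: "S b0 \<ge> 1" unfolding S_def using assms
    by (metis UNIV_I finite_class.finite_UNIV le_trans member_le_sum zero_le)
  have R': "(\<lambda>a. \<Sum>b\<in>UNIV. ?e' (a, b)) = R(a0 := R a0 - 1)"
  proof
    fix a show "(\<Sum>b\<in>UNIV. ?e' (a, b)) = (R(a0 := R a0 - 1)) a"
    proof (cases "a = a0")
      case True
      have "(\<Sum>b\<in>UNIV. ?e' (a, b)) = (\<Sum>b\<in>UNIV. ((\<lambda>b. e (a0, b))(b0 := e (a0, b0) - 1)) b)"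
        using True by (intro sum.cong) auto
      also have "\<dots> = R a0 - 1" unfolding R_def using sum_dec[of "\<lambda>b. e (a0, b)" b0] assms by simp
      finally show ?thesis using True by simp
    next
      case False then show ?thesis unfolding R_def by simp
    qed
  qed
  have S': "(\<lambda>b. \<Sum>a\<in>UNIV. ?e' (a, b)) = S(b0 := S b0 - 1)"
  proof
    fix b show "(\<Sum>a\<in>UNIV. ?e' (a, b)) = (S(b0 := S b0 - 1)) b"
    proof (cases "b = b0")
      case True
      have "(\<Sum>a\<in>UNIV. ?e' (a, b)) = (\<Sum>a\<in>UNIV. ((\<lambda>a. e (a, b0))(a0 := e (a0, b0) - 1)) a)"
        using True by (intro sum.cong) auto
      also have "\<dots> = S b0 - 1" unfolding S_def using sum_dec[of "\<lambda>a. e (a, b0)" a0] assms by simp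
      finally show ?thesis using True by simp
    next
      case False then show ?thesis unfolding S_def by simp
    qed
  qed
  have PR: "(\<Prod>a\<in>UNIV. fact (R a) :: real) = real (R a0) * (\<Prod>a\<in>UNIV. fact ((R(a0 := R a0 - 1)) a))"
    by (rule prod_fact_dec[of R a0, OF R1])
  have PS: "(\<Prod>b\<in>UNIV. fact (S b) :: real) = real (S b0) * (\<Prod>b\<in>UNIV. fact ((S(b0 := S b0 - 1)) b))"
    by (rule prod_fact_dec[of S b0, OF S1])
  have PE: "(\<Prod>p\<in>UNIV. fact (e p) :: real) = real (e (a0,b0)) * (\<Prod>p\<in>UNIV. fact (?e' p))"
    by (rule prod_fact_dec[of e "(a0,b0)", OF assms])
  have pos: "(\<Prod>p\<in>UNIV. fact (?e' p) :: real) \<noteq> 0" by (simp add: prod_zero_iff)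
  have "Gf ?e' = (\<Prod>a\<in>UNIV. fact ((R(a0 := R a0 - 1)) a)) * (\<Prod>b\<in>UNIV. fact ((S(b0 := S b0 - 1)) b)) / (\<Prod>p\<in>UNIV. fact (?e' p))"
    unfolding Gf_def by (simp only: R'[symmetric] S'[symmetric])
  moreover have "Gf e = (\<Prod>a\<in>UNIV. fact (R a)) * (\<Prod>b\<in>UNIV. fact (S b)) / (\<Prod>p\<in>UNIV. fact (e p))"
    unfolding Gf_def R_def S_def ..
  ultimately have E1: "Gf ?e' * (\<Prod>p\<in>UNIV. fact (?e' p)) = (\<Prod>a\<in>UNIV. fact ((R(a0 := R a0 - 1)) a)) * (\<Prod>b\<in>UNIV. fact ((S(b0 := S b0 - 1)) b))"
    and E2: "Gf e * real (e (a0,b0)) * (\<Prod>p\<in>UNIV. fact (?e' p)) = real (R a0) * real (S b0) * ((\<Prod>a\<in>UNIV. fact ((R(a0 := R a0 - 1)) a)) * (\<Prod>b\<in>UNIV. fact ((S(b0 := S b0 - 1)) b)))"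
    using pos assms unfolding PR PS PE by (simp_all add: field_simps)
  have "Gf e * real (e (a0,b0)) * (\<Prod>p\<in>UNIV. fact (?e' p)) = (Gf ?e' * real (R a0) * real (S b0)) * (\<Prod>p\<in>UNIV. fact (?e' p))"
    by (subst E2, subst E1[symmetric]) (simp add: algebra_simps)
  then have "Gf e * real (e (a0,b0)) = Gf ?e' * real (R a0) * real (S b0)"
    using pos by simp
  then show ?thesis unfolding R_def S_def .
qed

lemma card_Suc_split:
  "card {i. i < Suc n \<and> P i} = card {i. i < n \<and> P i} + (if P n then 1 else 0)"
proof -
  have "{i. i < Suc n \<and> P i} = {i. i < n \<and> P i} \<union> (if P n then {n} else {})"
    by (auto simp: less_Suc_eq)
  then show ?thesis by (auto simp: card_insert_if)
qed

lemma sum_le_entry: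
  fixes e :: "'b::finite \<Rightarrow> nat"
  shows "e a \<le> (\<Sum>a\<in>UNIV. e a)"
  by (rule member_le_sum) auto

lemma group_count:
  fixes x :: "nat \<Rightarrow> 'a::finite" and g :: "'a \<Rightarrow> real"
  shows "(\<Sum>j\<in>{0..<m}. g (x j)) = (\<Sum>a\<in>UNIV. real (card {i. i < m \<and> x i = a}) * g a)"
proof -
  have "(\<Sum>j\<in>{0..<m}. g (x j)) = (\<Sum>a\<in>UNIV. \<Sum>j\<in>{j \<in> {0..<m}. x j = a}. g (x j))"
    by (rule sum.group[symmetric]) auto
  also have "\<dots> = (\<Sum>a\<in>UNIV. \<Sum>j\<in>{j \<in> {0..<m}. x j = a}. g a)"
    by (intro sum.cong) auto
  also have "\<dots> = (\<Sum>a\<in>UNIV. real (card {i. i < m \<and> x i = a}) * g a)"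
    by (intro sum.cong) (auto intro!: arg_cong[where f=card])
  finally show ?thesis .
qed

lemma row_dec:
  fixes e :: "'a::finite \<times> 'b::finite \<Rightarrow> nat"
  assumes "e (a0, b0) \<ge> 1"
  shows "(\<Sum>b\<in>UNIV. (e((a0, b0) := e (a0, b0) - 1)) (a, b)) = (\<Sum>b\<in>UNIV. e (a, b)) - (if a = a0 then 1 else 0)"
proof (cases "a = a0")
  case True
  have "(\<Sum>b\<in>UNIV. (e((a0, b0) := e (a0, b0) - 1)) (a, b)) = (\<Sum>b\<in>UNIV. ((\<lambda>b. e (a0, b))(b0 := e (a0, b0) - 1)) b)"
    using True by (intro sum.cong) auto
  also have "\<dots> = (\<Sum>b\<in>UNIV. e (a0, b)) - 1" using sum_dec[of "\<lambda>b. e (a0, b)" b0] assms by simp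
  finally show ?thesis using True by simp
qed simp

lemma col_dec:
  fixes e :: "'a::finite \<times> 'b::finite \<Rightarrow> nat"
  assumes "e (a0, b0) \<ge> 1"
  shows "(\<Sum>a\<in>UNIV. (e((a0, b0) := e (a0, b0) - 1)) (a, b)) = (\<Sum>a\<in>UNIV. e (a, b)) - (if b = b0 then 1 else 0)"
proof (cases "b = b0")
  case True
  have "(\<Sum>a\<in>UNIV. (e((a0, b0) := e (a0, b0) - 1)) (a, b)) = (\<Sum>a\<in>UNIV. ((\<lambda>a. e (a, b0))(a0 := e (a0, b0) - 1)) a)"
    using True by (intro sum.cong) auto
  also have "\<dots> = (\<Sum>a\<in>UNIV. e (a, b0)) - 1" using sum_dec[of "\<lambda>a. e (a, b0)" a0] assms by simp
  finally show ?thesis using True by simp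
qed simp

lemma cnt_iff:
  fixes c :: "'a \<Rightarrow> 'b \<Rightarrow> nat"
  shows "(\<forall>a b. c a b + (if a = a0 \<and> b = b0 then 1 else 0) = e (a, b)) \<longleftrightarrow>
    (e (a0, b0) \<ge> 1 \<and> (\<forall>a b. c a b = (e((a0, b0) := e (a0, b0) - 1)) (a, b)))"
proof
  assume H: "\<forall>a b. c a b + (if a = a0 \<and> b = b0 then 1 else 0) = e (a, b)"
  have 1: "e (a0, b0) \<ge> 1" using H[rule_format, of a0 b0] by simp
  have "c a b = (e((a0, b0) := e (a0, b0) - 1)) (a, b)" for a b
    using H[rule_format, of a b] by (cases "a = a0 \<and> b = b0") auto
  with 1 show "e (a0, b0) \<ge> 1 \<and> (\<forall>a b. c a b = (e((a0, b0) := e (a0, b0) - 1)) (a, b))" by blast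
next
  assume H: "e (a0, b0) \<ge> 1 \<and> (\<forall>a b. c a b = (e((a0, b0) := e (a0, b0) - 1)) (a, b))"
  show "\<forall>a b. c a b + (if a = a0 \<and> b = b0 then 1 else 0) = e (a, b)"
  proof (intro allI)
    fix a b show "c a b + (if a = a0 \<and> b = b0 then 1 else 0) = e (a, b)"
      using H by (cases "a = a0 \<and> b = b0") auto
  qed
qed

lemma key:
  fixes x v :: "nat \<Rightarrow> 'a::finite" and e :: "'a \<times> 'a \<Rightarrow> nat"
  assumes "\<And>a. card {i. i < n \<and> x i = a} = (\<Sum>b\<in>UNIV. e (a, b))"
    and "\<And>b. card {i. i < n \<and> v i = b} = (\<Sum>a\<in>UNIV. e (a, b))"
  shows "(\<Sum>\<sigma>\<in>{\<sigma>. \<sigma> permutes {0..<n}}.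
           if (\<forall>a b. card {i. i < n \<and> x (\<sigma> i) = a \<and> v i = b} = e (a, b)) then 1 else 0 :: real)
         = Gf e"
  using assms
proof (induction n arbitrary: x e)
  case 0
  have e0: "e p = 0" for p
  proof -
    obtain a b where p: "p = (a, b)" by fastforce
    have "(\<Sum>b\<in>UNIV. e (a, b)) = 0" using "0.prems"(1)[of a] by simp
    then show ?thesis using p by simp
  qed
  have "{\<sigma>. \<sigma> permutes {0..<(0::nat)}} = {id}" by (auto simp: permutes_empty)
  then show ?case using e0 by (simp add: Gf_def)
next
  case (Suc n)
  define S where "S = {0..<n}"
  have ins: "{0..<Suc n} = insert n S" unfolding S_def by auto
  have nS: "n \<notin> S" "finite S" unfolding S_def by auto
  define cond where "cond = (\<lambda>m (x::nat \<Rightarrow> 'a) (e::'a \<times> 'a \<Rightarrow> nat) (\<sigma>::nat \<Rightarrow> nat). \<forall>a b. card {i. i < m \<and> x (\<sigma> i) = a \<and> v i = b} = e (a, b))"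
  define R where "R = (\<lambda>a. \<Sum>b\<in>UNIV. e (a, b))"
  define T where "T = (\<lambda>b. \<Sum>a\<in>UNIV. e (a, b))"
  let ?b0 = "v n"
  have T1: "T ?b0 \<ge> 1" using Suc.prems(2)[of ?b0] unfolding T_def
    by (simp add: card_Suc_split)
  have inner: "(\<Sum>q\<in>{q. q permutes S}. if cond (Suc n) x e (transpose n b \<circ> q) then 1 else 0 :: real)
      = Gf e * real (e (x b, ?b0)) / (real (R (x b)) * real (T ?b0))" if b: "b \<in> insert n S" for b
  proof -
    define y where "y = x \<circ> transpose n b"
    define e' where "e' = e((x b, ?b0) := e (x b, ?b0) - 1)"
    have bn: "b < Suc n" using b unfolding S_def by auto
    have yn: "y n = x b" unfolding y_def by simp
    have cnty: "card {i. i < Suc n \<and> y i = a} = card {i. i < Suc n \<and> x i = a}" for a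
    proof -
      have "{i. i < Suc n \<and> x i = a} = transpose n b ` {i. i < Suc n \<and> y i = a}"
      proof (rule set_eqI, rule iffI)
        fix i assume i: "i \<in> {i. i < Suc n \<and> x i = a}"
        then have "transpose n b i \<in> {i. i < Suc n \<and> y i = a}"
          using bn by (auto simp: y_def transpose_def)
        then show "i \<in> transpose n b ` {i. i < Suc n \<and> y i = a}"
          by (rule image_eqI[of _ _ "transpose n b i", rotated]) simp
      qed (auto simp: y_def transpose_def bn)
      moreover have "inj_on (transpose n b) {i. i < Suc n \<and> y i = a}"
        by (rule inj_onI) (rule transpose_eq_imp_eq)
      ultimately show ?thesis by (simp add: card_image)
    qed
    have cond_iff: "cond (Suc n) x e (transpose n b \<circ> q) \<longleftrightarrow> e (x b, ?b0) \<ge> 1 \<and> cond n y e' q"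
      if q: "q permutes S" for q
    proof -
      have qn: "q n = n" using q nS(1) by (simp add: permutes_not_in)
      have "card {i. i < Suc n \<and> x ((transpose n b \<circ> q) i) = a \<and> v i = b'}
          = card {i. i < n \<and> y (q i) = a \<and> v i = b'} + (if a = x b \<and> b' = ?b0 then 1 else 0)" for a b'
      proof -
        have "card {i. i < Suc n \<and> x ((transpose n b \<circ> q) i) = a \<and> v i = b'}
            = card {i. i < Suc n \<and> y (q i) = a \<and> v i = b'}" by (simp add: y_def)
        also have "\<dots> = card {i. i < n \<and> y (q i) = a \<and> v i = b'} + (if a = x b \<and> b' = ?b0 then 1 else 0)"
          by (subst card_Suc_split) (use qn yn in auto)
        finally show ?thesis .
      qed
      then show ?thesis unfolding cond_def e'_def using cnt_iff[of "\<lambda>a b'. card {i. i < n \<and> y (q i) = a \<and> v i = b'}" "x b" ?b0 e]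
        by simp
    qed
    show ?thesis
    proof (cases "e (x b, ?b0) \<ge> 1")
      case False
      then have "e (x b, ?b0) = 0" by simp
      then show ?thesis using cond_iff by simp
    next
      case True
      have IH: "(\<Sum>q\<in>{q. q permutes S}. if cond n y e' q then 1 else 0 :: real) = Gf e'"
        unfolding S_def cond_def
      proof (rule Suc.IH)
        fix a
        have "card {i. i < Suc n \<and> y i = a} = card {i. i < n \<and> y i = a} + (if x b = a then 1 else 0)"
          using card_Suc_split[where P = "\<lambda>i. y i = a"] yn by simp
        then show "card {i. i < n \<and> y i = a} = (\<Sum>b\<in>UNIV. e' (a, b))"
          unfolding e'_def row_dec[of e "x b" "v n", OF True] using cnty[of a] Suc.prems(1)[of a] by auto
      next
        fix b'
        have "card {i. i < Suc n \<and> v i = b'} = card {i. i < n \<and> v i = b'} + (if ?b0 = b' then 1 else 0)"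
          using card_Suc_split[where P = "\<lambda>i. v i = b'"] by simp
        then show "card {i. i < n \<and> v i = b'} = (\<Sum>a\<in>UNIV. e' (a, b'))"
          unfolding e'_def col_dec[of e "x b" "v n", OF True] using Suc.prems(2)[of b'] by auto
      qed
      have "(\<Sum>q\<in>{q. q permutes S}. if cond (Suc n) x e (transpose n b \<circ> q) then 1 else 0 :: real)
          = (\<Sum>q\<in>{q. q permutes S}. if cond n y e' q then 1 else 0 :: real)"
        using cond_iff True by (intro sum.cong) auto
      also have "\<dots> = Gf e'" by (rule IH)
      finally have 1: "(\<Sum>q\<in>{q. q permutes S}. if cond (Suc n) x e (transpose n b \<circ> q) then 1 else 0 :: real) = Gf e'" .
      have R1: "R (x b) \<ge> 1" unfolding R_def using True sum_le_entry[of "\<lambda>b'. e (x b, b')" ?b0]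
        by simp
      have "Gf e * real (e (x b, ?b0)) = Gf e' * real (R (x b)) * real (T ?b0)"
        unfolding e'_def R_def T_def by (rule Gf_step[of e "x b" "v n", OF True])
      then show ?thesis unfolding 1 using R1 T1 by (simp add: field_simps)
    qed
  qed
  have "(\<Sum>\<sigma>\<in>{\<sigma>. \<sigma> permutes {0..<Suc n}}. if cond (Suc n) x e \<sigma> then 1 else 0 :: real)
     = (\<Sum>b\<in>insert n S. \<Sum>q\<in>{q. q permutes S}. if cond (Suc n) x e (transpose n b \<circ> q) then 1 else 0 :: real)"
    unfolding ins by (rule sum_over_permutations_insert[OF nS(2) nS(1)])
  also have "\<dots> = (\<Sum>b\<in>{0..<Suc n}. Gf e * real (e (x b, ?b0)) / (real (R (x b)) * real (T ?b0)))"
    unfolding ins by (intro sum.cong refl inner)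
  also have "\<dots> = (\<Sum>a\<in>UNIV. real (card {i. i < Suc n \<and> x i = a}) * (Gf e * real (e (a, ?b0)) / (real (R a) * real (T ?b0))))"
    by (rule group_count)
  also have "\<dots> = (\<Sum>a\<in>UNIV. Gf e * real (e (a, ?b0)) / real (T ?b0))"
  proof (intro sum.cong refl)
    fix a
    have c: "card {i. i < Suc n \<and> x i = a} = R a" unfolding R_def by (rule Suc.prems(1))
    show "real (card {i. i < Suc n \<and> x i = a}) * (Gf e * real (e (a, ?b0)) / (real (R a) * real (T ?b0)))
        = Gf e * real (e (a, ?b0)) / real (T ?b0)"
    proof (cases "R a = 0")
      case True
      then have "e (a, ?b0) = 0" unfolding R_def using sum_le_entry[of "\<lambda>b'. e (a, b')" ?b0] by simp
      then show ?thesis by simp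
    qed (simp add: c)
  qed
  also have "\<dots> = Gf e * real (T ?b0) / real (T ?b0)"
    unfolding T_def by (simp add: sum_divide_distrib[symmetric] sum_distrib_left[symmetric])
  also have "\<dots> = Gf e" using T1 by simp
  finally show ?case unfolding cond_def .
qed


lemma perm_vec_length [simp]: "length (perm_vec \<sigma> u) = length u"
  by (simp add: perm_vec_def)

lemma perm_vec_nth [simp]: "i < length u \<Longrightarrow> perm_vec \<sigma> u ! i = u ! \<sigma> i"
  by (simp add: perm_vec_def)

lemma comp_perm_vec:
  assumes "\<sigma> permutes {0..<length u}"
  shows "comp (perm_vec \<sigma> u) = comp u"
proof
  fix a
  let ?A = "{i. i < length u \<and> u ! \<sigma> i = a}"
  have "{i. i < length u \<and> u ! i = a} = \<sigma> ` ?A"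
  proof (rule set_eqI, rule iffI)
    fix i assume i: "i \<in> {i. i < length u \<and> u ! i = a}"
    have "inv \<sigma> i < length u" using i permutes_in_image[OF permutes_inv[OF assms]] by auto
    moreover have "\<sigma> (inv \<sigma> i) = i" using assms by (simp add: permutes_inverses(1))
    ultimately show "i \<in> \<sigma> ` ?A" using i by (metis (mono_tags, lifting) image_eqI mem_Collect_eq)
  qed (use permutes_in_image[OF assms] in auto)
  moreover have "inj_on \<sigma> ?A" using permutes_inj[OF assms] by (simp add: inj_on_def inj_def)
  ultimately have "card {i. i < length u \<and> u ! i = a} = card ?A" by (simp add: card_image)
  moreover have "{i. i < length (perm_vec \<sigma> u) \<and> perm_vec \<sigma> u ! i = a} = ?A" by auto
  ultimately show "comp (perm_vec \<sigma> u) a = comp u a"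
    unfolding comp_def by simp
qed

lemma perm_vec_inj:
  assumes "\<sigma> permutes {0..<n}"
  shows "inj_on (perm_vec \<sigma>) {u. length u = n}"
proof (rule inj_onI)
  fix u w assume u: "u \<in> {u. length u = n}" and w: "w \<in> {u. length u = n}"
    and eq: "perm_vec \<sigma> u = perm_vec \<sigma> w"
  show "u = w"
  proof (rule nth_equalityI)
    show "length u = length w" using u w by simp
    fix i assume i: "i < length u"
    define j where "j = inv \<sigma> i"
    have j: "j < n" "\<sigma> j = i"
      using i u permutes_in_image[OF permutes_inv[OF assms], of i] permutes_inverses(1)[OF assms, of i]
      unfolding j_def by auto
    have "perm_vec \<sigma> u ! j = perm_vec \<sigma> w ! j" using eq by simp
    then show "u ! i = w ! i" using j u w by simp
  qed
qed

lemma eta_perm_iff: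
  assumes "length u = n"
  shows "eta (perm_vec \<sigma> u) v = e \<longleftrightarrow>
    (\<forall>a b. card {i. i < n \<and> u ! (\<sigma> i) = a \<and> v ! i = b} = e (a, b))"
proof -
  have "eta (perm_vec \<sigma> u) v (a, b) = card {i. i < n \<and> u ! (\<sigma> i) = a \<and> v ! i = b}" for a b
    unfolding eta_def using assms by (auto intro!: arg_cong[where f=card])
  then show ?thesis by (auto simp: fun_eq_iff)
qed

theorem mainTheorem4:
  fixes C D :: "'a::{finite,comm_ring_1} list set" and n :: nat
    and e :: "'a \<times> 'a \<Rightarrow> nat" and r s :: "'a \<Rightarrow> nat"
  assumes "is_field_or_Zk TYPE('a)"
    and "R_linear_code n C" and "R_linear_code n D"
    and "bicomposition n e"
    and "\<And>a. r a = (\<Sum>b\<in>UNIV. e (a, b))"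
    and "\<And>b. s b = (\<Sum>a\<in>UNIV. e (a, b))"
  shows "real (\<Sum>\<sigma>\<in>{\<sigma>. \<sigma> permutes {0..<n}}. B_num (perm_code \<sigma> C) D r s e)
       = real (A_num C r) * real (A_num D s) * (\<Prod>a\<in>UNIV. fact (r a))
         * (\<Prod>b\<in>UNIV. fact (s b) / (\<Prod>a\<in>UNIV. fact (e (a, b))))"
proof -
  have lenC: "\<And>u. u \<in> C \<Longrightarrow> length u = n" using assms(2) unfolding R_linear_code_def by blast
  have lenD: "\<And>u. u \<in> D \<Longrightarrow> length u = n" using assms(3) unfolding R_linear_code_def by blast
  have finL: "finite {u::'a list. length u = n}" using finite_lists_length_eq[of "UNIV::'a set" n] by simp
  have finC: "finite C" using lenC by (intro finite_subset[OF _ finL]) auto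
  have finD: "finite D" using lenD by (intro finite_subset[OF _ finL]) auto
  define Cr where "Cr = {u \<in> C. comp u = r}"
  define Ds where "Ds = {v \<in> D. comp v = s}"
  define G where "G = {\<sigma>. \<sigma> permutes {0..<n}}"
  have finG: "finite G" unfolding G_def by (rule finite_permutations) simp
  have finCD: "finite (Cr \<times> Ds)" unfolding Cr_def Ds_def using finC finD by simp
  define P where "P = (\<lambda>\<sigma> (u, v). eta (perm_vec \<sigma> u) v = e)"
  have B: "real (B_num (perm_code \<sigma> C) D r s e) = (\<Sum>p\<in>Cr \<times> Ds. if P \<sigma> p then 1 else 0)"
    if \<sigma>: "\<sigma> \<in> G" for \<sigma>
  proof -
    have \<sigma>': "\<sigma> permutes {0..<n}" using \<sigma> unfolding G_def by simp
    have "{(w, v). w \<in> perm_code \<sigma> C \<and> v \<in> D \<and> comp w = r \<and> comp v = s \<and> eta w v = e}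
       = (\<lambda>(u, v). (perm_vec \<sigma> u, v)) ` {p \<in> Cr \<times> Ds. P \<sigma> p}"
      unfolding perm_code_def Cr_def Ds_def P_def
      using comp_perm_vec[of \<sigma>] lenC \<sigma>' by force
    moreover have "inj_on (\<lambda>(u, v). (perm_vec \<sigma> u, v)) {p \<in> Cr \<times> Ds. P \<sigma> p}"
      using perm_vec_inj[OF \<sigma>'] lenC unfolding Cr_def inj_on_def by auto
    ultimately have "B_num (perm_code \<sigma> C) D r s e = card {p \<in> Cr \<times> Ds. P \<sigma> p}"
      unfolding B_num_def by (simp add: card_image)
    also have "real \<dots> = (\<Sum>p\<in>Cr \<times> Ds. if P \<sigma> p then 1 else 0)"
    proof -
      have "{p \<in> Cr \<times> Ds. P \<sigma> p} = Cr \<times> Ds \<inter> Collect (P \<sigma>)" by blast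
      then show ?thesis using finCD by (simp add: sum.If_cases)
    qed
    finally show ?thesis .
  qed
  have K: "(\<Sum>\<sigma>\<in>G. if P \<sigma> p then 1 else 0 :: real) = Gf e" if p: "p \<in> Cr \<times> Ds" for p
  proof -
    obtain u v where uv: "p = (u, v)" by fastforce
    have u: "u \<in> C" "comp u = r" and v: "v \<in> D" "comp v = s" using p uv unfolding Cr_def Ds_def by auto
    have "(\<Sum>\<sigma>\<in>G. if P \<sigma> p then 1 else 0 :: real)
       = (\<Sum>\<sigma>\<in>{\<sigma>. \<sigma> permutes {0..<n}}.
           if (\<forall>a b. card {i. i < n \<and> (\<lambda>i. u ! i) (\<sigma> i) = a \<and> (\<lambda>i. v ! i) i = b} = e (a, b)) then 1 else 0)"
      unfolding G_def P_def uv using eta_perm_iff[OF lenC[OF u(1)]] by simp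
    also have "\<dots> = Gf e"
    proof (rule key)
      fix a show "card {i. i < n \<and> u ! i = a} = (\<Sum>b\<in>UNIV. e (a, b))"
        using fun_cong[OF u(2), of a] lenC[OF u(1)] assms(5)[of a] unfolding comp_def by simp
    next
      fix b show "card {i. i < n \<and> v ! i = b} = (\<Sum>a\<in>UNIV. e (a, b))"
        using fun_cong[OF v(2), of b] lenD[OF v(1)] assms(6)[of b] unfolding comp_def by simp
    qed
    finally show ?thesis .
  qed
  have "real (\<Sum>\<sigma>\<in>G. B_num (perm_code \<sigma> C) D r s e) = (\<Sum>\<sigma>\<in>G. \<Sum>p\<in>Cr \<times> Ds. if P \<sigma> p then 1 else 0 :: real)"
    unfolding of_nat_sum by (intro sum.cong refl B)
  also have "\<dots> = (\<Sum>p\<in>Cr \<times> Ds. \<Sum>\<sigma>\<in>G. if P \<sigma> p then 1 else 0 :: real)"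
    by (rule sum.swap)
  also have "\<dots> = (\<Sum>p\<in>Cr \<times> Ds. Gf e)" by (intro sum.cong refl K)
  also have "\<dots> = real (card Cr) * real (card Ds) * Gf e" by (simp add: card_cartesian_product)
  finally show ?thesis unfolding G_def Cr_def Ds_def A_num_def Gf_alt assms(5)[symmetric] assms(6)[symmetric]
    by simp
qed

end
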